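(* Let $P=[-1,\infty)$ and let $\tilde v(x)=p(x)e^{-\lambda x}$, $\tilde w(x)=q(x)e^{-\lambda x}$, where $p$ is a positive rational function on $P$, $q$ is a polynomial and $\lambda>0$. Suppose that $\mathcal F_{\tilde v,\tilde w}$ vanishes on the affine-linear functions and that $P$ is $(\tilde v,\tilde w)$ K-stable. Then the $(\tilde v,\tilde w)$-cscK metric $\omega$ on $\mathbb C$ with moment image $P$ satisfies $\omega\in\mathcal H^\varepsilon_{\alpha,T}$ for every $\varepsilon\in(0,\tfrac12)$.
   Context: $S^1$ acts on $\mathbb C$ by rotation with generator $Y$ of period $2\pi$. A metric on $\mathbb C$ with moment image $P$ is an $S^1$-invariant Kähler metric with proper moment map $\mu$ with image $[-1,\infty)$. Write $H(x)=g(Y,Y)$ at points where $\mu=x$; the symplectic potential $u$ on $(-1,\infty)$ satisfies $u''=1/H$. The metric is $(\tilde v,\tilde w)$-cscK if $-(\tilde vH)''=\tilde w$ on $(-1,\infty)$ (equivalently $\tilde v(\mu)\mathrm{Scal}(\omega)+2\Delta_\omega\tilde v(\mu)+g(Y,Y)\tilde v''(\mu)=\tilde w(\mu)$). Under the stated K-stability such a metric exists, and it is unique since $H$ solves this ODE with $H(-1)=0$, $H'(-1)=2$. Futaki invariant: $\mathcal F_{\tilde v,\tilde w}(f)=2\tilde v(-1)f(-1)-\int_{-1}^\infty f\tilde w\,dx$. $P$ is $(\tilde v,\tilde w)$ K-stable if $\mathcal F_{\tilde v,\tilde w}(f)\ge0$ for every convex piecewise-linear $f$ (maximum of finitely many affine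 functions), with equality only for affine $f$. $P_\delta=[-1+\delta,\infty)$. Class $\mathcal H^\varepsilon_{\alpha,T}$ (with respect to the weight $v=\tilde v$): $\omega$ lies in it if (1) $\sup_P \tilde v^\varepsilon H^2<\infty$; (2) $\sup_P\tilde v^\varepsilon |H'|^2<\infty$; (3) there are $\bar\delta,C>0$ with $|H''|^2<C$ on $[-1,-1+\bar\delta]$; (4) $\sup_P|\tilde v^\varepsilon u|<\infty$ and $\sum_{k\le2}\sup_{P_\delta}|\tilde v^\varepsilon u^{(k)}|<\infty$ for all small $\delta>0$. *)

theory Defs
  imports "HOL-Analysis.Analysis" "HOL-Computational_Algebra.Polynomial"
begin

definition futaki :: "(real \<Rightarrow> real) \<Rightarrow> (real \<Rightarrow> real) \<Rightarrow> (real \<Rightarrow> real) \<Rightarrow> real" where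
  "futaki v w f = 2 * v (-1) * f (-1) - (LBINT x:{-1..}. f x * w x)"

definition convex_pl :: "(real \<Rightarrow> real) \<Rightarrow> bool" where
  "convex_pl f \<longleftrightarrow> (\<exists>A :: (real \<times> real) set. finite A \<and> A \<noteq> {} \<and>
      f = (\<lambda>x. Max ((\<lambda>(a, b). a * x + b) ` A)))"

definition affine_on_P :: "(real \<Rightarrow> real) \<Rightarrow> bool" where
  "affine_on_P f \<longleftrightarrow> (\<exists>a b. \<forall>x\<in>{-1..}. f x = a * x + b)"

definition K_stable :: "(real \<Rightarrow> real) \<Rightarrow> (real \<Rightarrow> real) \<Rightarrow> bool" where
  "K_stable v w \<longleftrightarrow> (\<forall>f. convex_pl f \<longrightarrow>
      futaki v w f \<ge> 0 \<and> (futaki v w f = 0 \<longrightarrow> affine_on_P f))"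

text \<open>H (the function g(Y,Y) as function of the moment map) is the moment profile of
  the (v,w)-cscK metric on C with moment image [-1,infinity).\<close>
definition cscK_profile :: "(real \<Rightarrow> real) \<Rightarrow> (real \<Rightarrow> real) \<Rightarrow> (real \<Rightarrow> real) \<Rightarrow> bool" where
  "cscK_profile v w H \<longleftrightarrow>
     (\<forall>x>-1. H differentiable at x \<and> deriv H differentiable at x \<and> H x > 0) \<and>
     H (-1) = 0 \<and> (H has_real_derivative 2) (at (-1) within {-1..}) \<and>
     (\<forall>x>-1. - deriv (deriv (\<lambda>y. v y * H y)) x = w x)"

definition symp_potential :: "(real \<Rightarrow> real) \<Rightarrow> (real \<Rightarrow> real) \<Rightarrow> bool" where
  "symp_potential H u \<longleftrightarrow>
     (\<forall>x>-1. u differentiable at x \<and> deriv u differentiable at x \<and>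
              deriv (deriv u) x = 1 / H x)"

definition in_H_class :: "real \<Rightarrow> (real \<Rightarrow> real) \<Rightarrow> (real \<Rightarrow> real) \<Rightarrow> bool" where
  "in_H_class eps v H \<longleftrightarrow>
     (\<exists>C. \<forall>x\<in>{-1..}. v x powr eps * (H x)\<^sup>2 \<le> C) \<and>
     (\<exists>C. \<forall>x\<in>{-1<..}. v x powr eps * \<bar>deriv H x\<bar>\<^sup>2 \<le> C) \<and>
     (\<exists>\<delta> C. \<delta> > 0 \<and> C > 0 \<and> (\<forall>x\<in>{-1<..-1+\<delta>}. \<bar>deriv (deriv H) x\<bar>\<^sup>2 < C)) \<and>
     (\<forall>u. symp_potential H u \<longrightarrow>
        (\<exists>C. \<forall>x\<in>{-1<..}. \<bar>v x powr eps * u x\<bar> \<le> C) \<and>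
        (\<exists>\<delta>0>0. \<forall>\<delta>. 0 < \<delta> \<and> \<delta> < \<delta>0 \<longrightarrow>
           (\<forall>k\<le>(2::nat). \<exists>C. \<forall>x\<in>{-1+\<delta>..}. \<bar>v x powr eps * (deriv ^^ k) u x\<bar> \<le> C)))"

end

theory Submission imports Defs "HOL-Computational_Algebra.Fundamental_Theorem_Algebra" "HOL-Real_Asymp.Real_Asymp" begin

definition pg :: "real set \<Rightarrow> (real \<Rightarrow> real) \<Rightarrow> bool" where
  "pg S f \<longleftrightarrow> (\<exists>C m. \<forall>x\<in>S. \<bar>f x\<bar> \<le> C * (1 + \<bar>x\<bar>) ^ m)"

lemma pg_poly: "pg S (poly A)"
proof -
  have "\<bar>poly A x\<bar> \<le> (\<Sum>i\<le>degree A. \<bar>coeff A i\<bar>) * (1 + \<bar>x\<bar>) ^ degree A" for x :: real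
  proof -
    have "\<bar>poly A x\<bar> = \<bar>\<Sum>i\<le>degree A. coeff A i * x ^ i\<bar>" by (simp add: poly_altdef)
    also have "\<dots> \<le> (\<Sum>i\<le>degree A. \<bar>coeff A i * x ^ i\<bar>)" by (rule sum_abs)
    also have "\<dots> \<le> (\<Sum>i\<le>degree A. \<bar>coeff A i\<bar> * (1 + \<bar>x\<bar>) ^ degree A)"
    proof (rule sum_mono)
      fix i assume "i \<in> {..degree A}"
      hence "i \<le> degree A" by simp
      have "\<bar>x\<bar> ^ i \<le> (1 + \<bar>x\<bar>) ^ i" by (rule power_mono) auto
      also have "\<dots> \<le> (1 + \<bar>x\<bar>) ^ degree A" by (rule power_increasing[OF \<open>i \<le> degree A\<close>]) auto
      finally show "\<bar>coeff A i * x ^ i\<bar> \<le> \<bar>coeff A i\<bar> * (1 + \<bar>x\<bar>) ^ degree A"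
        by (simp add: abs_mult power_abs mult_left_mono)
    qed
    also have "\<dots> = (\<Sum>i\<le>degree A. \<bar>coeff A i\<bar>) * (1 + \<bar>x\<bar>) ^ degree A"
      by (simp add: sum_distrib_right)
    finally show ?thesis .
  qed
  thus ?thesis unfolding pg_def by blast
qed

lemma pg_const: "pg S (\<lambda>x. c)"
  unfolding pg_def by (rule exI[of _ "\<bar>c\<bar>"], rule exI[of _ 0]) simp

lemma pg_subset: "pg S f \<Longrightarrow> T \<subseteq> S \<Longrightarrow> pg T f"
  unfolding pg_def by blast

lemma pg_cong: "pg S f \<Longrightarrow> (\<And>x. x \<in> S \<Longrightarrow> g x = f x) \<Longrightarrow> pg S g"
  unfolding pg_def by auto

lemma pg_mult: assumes "pg S f" "pg S g" shows "pg S (\<lambda>x. f x * g x)"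
proof -
  obtain C m where C: "\<forall>x\<in>S. \<bar>f x\<bar> \<le> C * (1 + \<bar>x\<bar>) ^ m" using assms(1) unfolding pg_def by blast
  obtain D n where D: "\<forall>x\<in>S. \<bar>g x\<bar> \<le> D * (1 + \<bar>x\<bar>) ^ n" using assms(2) unfolding pg_def by blast
  have "\<bar>f x * g x\<bar> \<le> (C * D) * (1 + \<bar>x\<bar>) ^ (m + n)" if "x \<in> S" for x
  proof -
    have "\<bar>f x * g x\<bar> = \<bar>f x\<bar> * \<bar>g x\<bar>" by (simp add: abs_mult)
    also have "\<dots> \<le> (C * (1 + \<bar>x\<bar>) ^ m) * (D * (1 + \<bar>x\<bar>) ^ n)"
      using C D that by (intro mult_mono) auto
    also have "\<dots> = (C * D) * (1 + \<bar>x\<bar>) ^ (m + n)" by (simp add: power_add)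
    finally show ?thesis .
  qed
  thus ?thesis unfolding pg_def by blast
qed

lemma pg_add: assumes "pg S f" "pg S g" shows "pg S (\<lambda>x. f x + g x)"
proof -
  obtain C m where C: "\<forall>x\<in>S. \<bar>f x\<bar> \<le> C * (1 + \<bar>x\<bar>) ^ m" using assms(1) unfolding pg_def by blast
  obtain D n where D: "\<forall>x\<in>S. \<bar>g x\<bar> \<le> D * (1 + \<bar>x\<bar>) ^ n" using assms(2) unfolding pg_def by blast
  have "\<bar>f x + g x\<bar> \<le> (\<bar>C\<bar> + \<bar>D\<bar>) * (1 + \<bar>x\<bar>) ^ (m + n)" if "x \<in> S" for x
  proof -
    have 1: "(1 + \<bar>x\<bar>) ^ m \<le> (1 + \<bar>x\<bar>) ^ (m + n)" "(1 + \<bar>x\<bar>) ^ n \<le> (1 + \<bar>x\<bar>) ^ (m + n)"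
      by (auto intro: power_increasing)
    have "C * (1 + \<bar>x\<bar>) ^ m \<le> \<bar>C\<bar> * (1 + \<bar>x\<bar>) ^ (m + n)"
      using mult_mono[OF abs_ge_self 1(1)] by auto
    moreover have "D * (1 + \<bar>x\<bar>) ^ n \<le> \<bar>D\<bar> * (1 + \<bar>x\<bar>) ^ (m + n)"
      using mult_mono[OF abs_ge_self 1(2)] by auto
    moreover have "\<bar>f x + g x\<bar> \<le> \<bar>f x\<bar> + \<bar>g x\<bar>" by (rule abs_triangle_ineq)
    moreover have "\<bar>f x\<bar> \<le> C * (1 + \<bar>x\<bar>) ^ m" "\<bar>g x\<bar> \<le> D * (1 + \<bar>x\<bar>) ^ n" using C D that by auto
    ultimately show ?thesis by (simp add: distrib_right)
  qed
  thus ?thesis unfolding pg_def by blast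
qed

lemma pg_abs_bounded: "(\<And>x. x \<in> S \<Longrightarrow> \<bar>f x\<bar> \<le> B) \<Longrightarrow> pg S f"
  unfolding pg_def by (rule exI[of _ B], rule exI[of _ 0]) simp

lemma poly_lower:
  fixes B :: "real poly"
  assumes nz: "\<forall>x\<ge>c. poly B x \<noteq> 0"
  shows "\<exists>\<beta>>0. \<forall>x\<ge>c. \<beta> \<le> \<bar>poly B x\<bar>"
proof (cases B)
  case (pCons a B')
  show ?thesis
  proof (cases "B' = 0")
    case True
    then have "\<forall>x. poly B x = a" using pCons by simp
    with nz show ?thesis by (metis order_refl zero_less_abs_iff)
  next
    case False
    obtain r where r: "\<forall>z::real. r \<le> norm z \<longrightarrow> 1 \<le> norm (poly (pCons a B') z)"
      using poly_infinity[OF False] by blast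
    define M where "M = max c r"
    have "continuous_on {c..M} (\<lambda>x. \<bar>poly B x\<bar>)"
      by (intro continuous_intros)
    then obtain x0 where x0: "x0 \<in> {c..M}" "\<forall>y\<in>{c..M}. \<bar>poly B x0\<bar> \<le> \<bar>poly B y\<bar>"
      using continuous_attains_inf[of "{c..M}" "\<lambda>x. \<bar>poly B x\<bar>"] by (auto simp: M_def)
    have pos: "\<bar>poly B x0\<bar> > 0" using nz x0 by auto
    show ?thesis
    proof (intro exI[of _ "min 1 \<bar>poly B x0\<bar>"] conjI allI impI)
      show "0 < min 1 \<bar>poly B x0\<bar>" using pos by simp
      fix x assume "c \<le> x"
      show "min 1 \<bar>poly B x0\<bar> \<le> \<bar>poly B x\<bar>"
      proof (cases "x \<le> M")
        case True
        then have "\<bar>poly B x0\<bar> \<le> \<bar>poly B x\<bar>" using x0(2) \<open>c \<le> x\<close> by auto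
        then show ?thesis by (simp add: min_le_iff_disj)
      next
        case False
        then have "r \<le> norm x" by (auto simp: M_def)
        then show ?thesis using r pCons by fastforce
      qed
    qed
  qed
qed

lemma pg_rat:
  fixes A B :: "real poly"
  assumes nz: "\<forall>x\<ge>c. poly B x \<noteq> 0"
  shows "pg {c..} (\<lambda>x. poly A x / poly B x)"
proof -
  obtain \<beta> where b: "\<beta> > 0" "\<forall>x\<ge>c. \<beta> \<le> \<bar>poly B x\<bar>" using poly_lower[OF nz] by blast
  have "pg {c..} (\<lambda>x. 1 / poly B x)"
  proof (rule pg_abs_bounded[of _ _ "1/\<beta>"])
    fix x assume "x \<in> {c..}"
    then have "\<beta> \<le> \<bar>poly B x\<bar>" using b by auto
    then show "\<bar>1 / poly B x\<bar> \<le> 1 / \<beta>" using b(1)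
      by (simp add: divide_simps)
  qed
  from pg_mult[OF pg_poly this] show ?thesis by simp
qed

lemma pow_le_exp: assumes "(y::real) \<ge> 0" shows "y ^ n \<le> real n ^ n * exp y"
proof (cases "n = 0")
  case True then show ?thesis using assms by simp
next
  case False
  then have n: "real n > 0" by simp
  have "y ^ n = real n ^ n * (y / real n) ^ n" using n by (simp add: power_divide)
  also have "(y / real n) ^ n \<le> exp (y / real n) ^ n"
    using assms n by (intro power_mono) (auto intro: order_trans[OF _ exp_ge_add_one_self])
  also have "exp (y / real n) ^ n = exp y"
    using n by (simp add: exp_of_nat_mult[symmetric])
  finally show ?thesis using n by (simp add: mult_left_mono)
qed

lemma pg_exp_bound:
  assumes "pg S f" "S \<subseteq> {-1..}" "a > 0"
  shows "\<exists>K. \<forall>x\<in>S. \<bar>f x\<bar> * exp (- a * x) \<le> K"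
proof -
  obtain C m where C: "\<forall>x\<in>S. \<bar>f x\<bar> \<le> C * (1 + \<bar>x\<bar>) ^ m" using assms(1) unfolding pg_def by blast
  have "\<bar>f x\<bar> * exp (- a * x) \<le> \<bar>C\<bar> * (real m ^ m / a ^ m) * exp (3 * a)" if "x \<in> S" for x
  proof -
    have x: "x \<ge> -1" using that assms(2) by auto
    have "(1 + \<bar>x\<bar>) ^ m \<le> (3 + x) ^ m" using x by (intro power_mono) auto
    also have "(3 + x) ^ m = (a * (3 + x)) ^ m / a ^ m" using assms(3) by (simp add: power_mult_distrib)
    also have "\<dots> \<le> real m ^ m * exp (a * (3 + x)) / a ^ m"
      using pow_le_exp[of "a * (3 + x)" m] x assms(3) by (intro divide_right_mono) auto
    finally have 1: "(1 + \<bar>x\<bar>) ^ m \<le> real m ^ m * exp (a * (3 + x)) / a ^ m" .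
    have "\<bar>f x\<bar> \<le> \<bar>C\<bar> * (1 + \<bar>x\<bar>) ^ m" using C that
      by (meson abs_ge_self dual_order.trans mult_right_mono zero_le_power abs_ge_zero add_nonneg_nonneg zero_le_one)
    also have "\<dots> \<le> \<bar>C\<bar> * (real m ^ m * exp (a * (3 + x)) / a ^ m)"
      using 1 by (intro mult_left_mono) auto
    finally have "\<bar>f x\<bar> * exp (- a * x) \<le> \<bar>C\<bar> * (real m ^ m * exp (a * (3 + x)) / a ^ m) * exp (- a * x)"
      by (intro mult_right_mono) auto
    also have "\<dots> = \<bar>C\<bar> * (real m ^ m / a ^ m) * (exp (a * (3 + x)) * exp (- a * x))" by simp
    also have "exp (a * (3 + x)) * exp (- a * x) = exp (3 * a)"
      by (simp add: exp_add[symmetric] algebra_simps)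
    finally show ?thesis by simp
  qed
  thus ?thesis by blast
qed

lemma pg_integrate:
  assumes der: "\<And>x. x \<ge> c \<Longrightarrow> (f has_real_derivative g x) (at x)"
    and pgg: "pg {c..} g"
  shows "pg {c..} f"
proof -
  obtain C m where C: "\<forall>x\<in>{c..}. \<bar>g x\<bar> \<le> C * (1 + \<bar>x\<bar>) ^ m" using pgg unfolding pg_def by blast
  define K where "K = \<bar>f c\<bar> + \<bar>C\<bar> * (1 + \<bar>c\<bar>) ^ (Suc m)"
  have "\<bar>f x\<bar> \<le> K * (1 + \<bar>x\<bar>) ^ Suc m" if x: "x \<ge> c" for x
  proof -
    have one: "1 \<le> (1 + \<bar>x\<bar>) ^ Suc m" by (rule one_le_power) simp
    have fc: "\<bar>f c\<bar> \<le> \<bar>f c\<bar> * (1 + \<bar>x\<bar>) ^ Suc m"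
      using mult_left_mono[OF one, of "\<bar>f c\<bar>"] by simp
    have diff: "\<bar>f x - f c\<bar> \<le> \<bar>C\<bar> * (1 + \<bar>c\<bar>) ^ (Suc m) * (1 + \<bar>x\<bar>) ^ Suc m"
    proof (cases "x = c")
      case True then show ?thesis by simp
    next
      case False
      with x have "c < x" by simp
      from MVT2[OF this, of f g] der obtain z where z: "c < z" "z < x" "f x - f c = (x - c) * g z"
        by auto
      have gz: "\<bar>g z\<bar> \<le> \<bar>C\<bar> * (1 + \<bar>z\<bar>) ^ m"
        using C z by (meson abs_ge_self atLeast_iff less_imp_le mult_right_mono order_trans zero_le_power abs_ge_zero add_nonneg_nonneg zero_le_one)
      have "\<bar>z\<bar> \<le> \<bar>c\<bar> + \<bar>x\<bar>" using z(1,2) by (auto simp: abs_if)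
      then have zb: "1 + \<bar>z\<bar> \<le> (1 + \<bar>c\<bar>) * (1 + \<bar>x\<bar>)"
        using mult_nonneg_nonneg[of "\<bar>c\<bar>" "\<bar>x\<bar>"] unfolding ring_distribs by linarith
      have "\<bar>x - c\<bar> \<le> \<bar>c\<bar> + \<bar>x\<bar>" by linarith
      then have xb: "\<bar>x - c\<bar> \<le> (1 + \<bar>c\<bar>) * (1 + \<bar>x\<bar>)"
        using mult_nonneg_nonneg[of "\<bar>c\<bar>" "\<bar>x\<bar>"] unfolding ring_distribs by linarith
      have "\<bar>f x - f c\<bar> = \<bar>x - c\<bar> * \<bar>g z\<bar>" using z by (simp add: abs_mult)
      also have "\<dots> \<le> ((1 + \<bar>c\<bar>) * (1 + \<bar>x\<bar>)) * (\<bar>C\<bar> * ((1 + \<bar>c\<bar>) * (1 + \<bar>x\<bar>)) ^ m)"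
      proof (rule mult_mono[OF xb])
        show "\<bar>g z\<bar> \<le> \<bar>C\<bar> * ((1 + \<bar>c\<bar>) * (1 + \<bar>x\<bar>)) ^ m"
          using gz mult_left_mono[OF power_mono[OF zb, of m], of "\<bar>C\<bar>"] by auto
      qed auto
      also have "\<dots> = \<bar>C\<bar> * (1 + \<bar>c\<bar>) ^ (Suc m) * (1 + \<bar>x\<bar>) ^ Suc m"
        by (simp only: power_mult_distrib power_Suc) (simp add: algebra_simps)
      finally show ?thesis .
    qed
    have "\<bar>f x\<bar> \<le> \<bar>f c\<bar> + \<bar>f x - f c\<bar>" by linarith
    also have "\<dots> \<le> K * (1 + \<bar>x\<bar>) ^ Suc m" using fc diff by (simp add: K_def distrib_right)
    finally show ?thesis .
  qed
  thus ?thesis unfolding pg_def by (intro exI[of _ K] exI[of _ "Suc m"]) auto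
qed

lemma first_order_poly:
  fixes lam :: real
  assumes "lam \<noteq> 0"
  shows "\<exists>R. smult lam R - pderiv R = q"
proof -
  have "\<forall>q::real poly. degree q \<le> n \<longrightarrow> (\<exists>R. smult lam R - pderiv R = q)" for n
  proof (induction n)
    case 0
    show ?case
    proof (intro allI impI)
      fix q :: "real poly" assume "degree q \<le> 0"
      then have "pderiv q = 0" by (simp add: pderiv_eq_0_iff)
      then show "\<exists>R. smult lam R - pderiv R = q"
        using assms by (intro exI[of _ "smult (1/lam) q"]) (simp add: pderiv_smult)
    qed
  next
    case (Suc n)
    show ?case
    proof (intro allI impI)
      fix q :: "real poly" assume "degree q \<le> Suc n"
      then have "degree (smult (1/lam) (pderiv q)) \<le> n" by (auto simp: degree_pderiv)
      then obtain R2 where R2: "smult lam R2 - pderiv R2 = smult (1/lam) (pderiv q)"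
        using Suc.IH by blast
      show "\<exists>R. smult lam R - pderiv R = q"
      proof (intro exI[of _ "smult (1/lam) q + R2"])
        have "smult lam (smult (1/lam) q + R2) - pderiv (smult (1/lam) q + R2)
              = q + (smult lam R2 - pderiv R2) - smult (1/lam) (pderiv q)"
          using assms by (simp add: pderiv_add pderiv_smult smult_add_right algebra_simps)
        also have "\<dots> = q" using R2 by simp
        finally show "smult lam (smult (1/lam) q + R2) - pderiv (smult (1/lam) q + R2) = q" .
      qed
    qed
  qed
  then show ?thesis by blast
qed

lemma der_pe: "((\<lambda>y. poly R y * exp (- lam * y)) has_real_derivative
   poly (pderiv R - smult lam R) x * exp (- lam * x)) (at x)"
  by (auto intro!: derivative_eq_intros simp: algebra_simps)

lemma pe_lim:
  fixes lam :: real
  assumes "lam > 0"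
  shows "((\<lambda>y. poly R y * exp (- lam * y)) \<longlongrightarrow> 0) at_top"
proof -
  obtain K where K: "\<forall>x\<in>{-1..}. \<bar>poly R x\<bar> * exp (- (lam/2) * x) \<le> K"
    using pg_exp_bound[OF pg_poly[of "{-1..}" R] order_refl, of "lam/2"] assms by auto
  have ev: "eventually (\<lambda>y. norm (poly R y * exp (- lam * y)) \<le> K * exp (- (lam/2) * y)) at_top"
  proof (rule eventually_at_top_linorderI[of "-1"])
    fix y :: real assume "y \<ge> -1"
    have e: "exp (- lam * y) = exp (- (lam/2) * y) * exp (- (lam/2) * y)" by (simp add: exp_add[symmetric])
    have "norm (poly R y * exp (- lam * y)) = (\<bar>poly R y\<bar> * exp (- (lam/2) * y)) * exp (- (lam/2) * y)"
      unfolding e by (simp add: abs_mult)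
    also have "\<dots> \<le> K * exp (- (lam/2) * y)" using K \<open>y \<ge> -1\<close> by (intro mult_right_mono) auto
    finally show "norm (poly R y * exp (- lam * y)) \<le> K * exp (- (lam/2) * y)" .
  qed
  have "((\<lambda>y. K * exp (- (lam/2) * y)) \<longlongrightarrow> 0) at_top"
    using assms by real_asymp
  from Lim_null_comparison[OF ev this] show ?thesis .
qed

lemma improper_FTC:
  fixes f F :: "real \<Rightarrow> real"
  assumes int: "set_integrable lborel {a..} f"
    and der: "\<And>x. (F has_real_derivative f x) (at x)"
    and cont: "\<And>x. isCont f x"
    and lim: "(F \<longlongrightarrow> 0) at_top"
  shows "(LBINT x:{a..}. f x) = - F a"
proof -
  have 1: "((\<lambda>b. LBINT x:{a..b}. f x) \<longlongrightarrow> (LBINT x:{a..}. f x)) at_top"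
    by (rule tendsto_set_lebesgue_integral_at_top[OF _ int]) auto
  have eq: "eventually (\<lambda>b. (LBINT x:{a..b}. f x) = F b - F a) at_top"
  proof (rule eventually_at_top_linorderI[of a])
    fix b assume "a \<le> b"
    have "(\<integral>x. f x * indicator {a .. b} x \<partial>lborel) = F b - F a"
      by (rule integral_FTC_Icc_real[OF \<open>a \<le> b\<close>]) (auto intro: der cont)
    then show "(LBINT x:{a..b}. f x) = F b - F a"
      by (simp add: set_lebesgue_integral_def mult.commute)
  qed
  have 2: "((\<lambda>b. F b - F a) \<longlongrightarrow> 0 - F a) at_top"
    by (intro tendsto_intros lim)
  have "((\<lambda>b. LBINT x:{a..b}. f x) \<longlongrightarrow> 0 - F a) at_top"
    using tendsto_cong[OF eq] 2 by simp
  from tendsto_unique[OF _ 1 this] show ?thesis by simp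
qed

lemma nonint_zero:
  fixes f :: "real \<Rightarrow> real"
  assumes "\<not> set_integrable lborel A f"
  shows "(LBINT x:A. f x) = 0"
  using assms unfolding set_lebesgue_integral_def set_integrable_def
  by (simp add: not_integrable_integral_eq)

lemma rat_has_deriv:
  fixes A B :: "real poly"
  assumes "poly B x \<noteq> 0"
  shows "((\<lambda>y. poly A y / poly B y) has_real_derivative
           poly (pderiv A * B - A * pderiv B) x / poly (B * B) x) (at x)"
proof -
  have "((\<lambda>y. poly A y / poly B y) has_real_derivative
           (poly (pderiv A) x * poly B x - poly A x * poly (pderiv B) x) / (poly B x * poly B x)) (at x)"
    using DERIV_divide[OF poly_DERIV[of A x] poly_DERIV[of B x] assms] by simp
  then show ?thesis by simp
qed

lemma rat_deriv_on:
  fixes A B :: "real poly"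
  assumes S: "open S" "\<And>y. y \<in> S \<Longrightarrow> f y = poly A y / poly B y" "\<And>y. y \<in> S \<Longrightarrow> poly B y \<noteq> 0"
    and x: "x \<in> S"
  shows "(f has_real_derivative poly (pderiv A * B - A * pderiv B) x / poly (B * B) x) (at x)"
    and "deriv f x = poly (pderiv A * B - A * pderiv B) x / poly (B * B) x"
proof -
  show 1: "(f has_real_derivative poly (pderiv A * B - A * pderiv B) x / poly (B * B) x) (at x)"
    by (rule has_field_derivative_transform_within_open[OF rat_has_deriv[OF S(3)[OF x]] S(1) x])
       (simp add: S(2))
  then show "deriv f x = poly (pderiv A * B - A * pderiv B) x / poly (B * B) x"
    by (rule DERIV_imp_deriv)
qed

lemma u_bound_left:
  fixes u u1 u2 :: "real \<Rightarrow> real"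
  assumes d1: "\<And>y. -1 < y \<Longrightarrow> (u has_real_derivative u1 y) (at y)"
    and d2: "\<And>y. -1 < y \<Longrightarrow> (u1 has_real_derivative u2 y) (at y)"
    and b: "\<And>y. -1 < y \<Longrightarrow> y \<le> 0 \<Longrightarrow> 0 < u2 y \<and> u2 y \<le> K / (y + 1)"
  shows "\<exists>B. \<forall>y. -1 < y \<and> y \<le> 0 \<longrightarrow> \<bar>u y\<bar> \<le> B"
proof -
  have Kpos: "K > 0" using b[of 0] by simp
  have a: "u1 x \<le> u1 0" if "-1 < x" "x \<le> 0" for x
  proof (cases "x = 0")
    case False
    with that have "x < 0" by simp
    from MVT2[OF this, of u1 u2] d2 that obtain z where z: "x < z" "z < 0" "u1 0 - u1 x = (0 - x) * u2 z"
      by force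
    have "u2 z > 0" using b[of z] z that by auto
    then show ?thesis using z \<open>x < 0\<close> by (smt (verit) mult_pos_pos)
  qed simp
  have bb: "u1 0 + K * ln (x + 1) \<le> u1 x" if "-1 < x" "x \<le> 0" for x
  proof (cases "x = 0")
    case False
    with that have "x < 0" by simp
    define phi where "phi y = u1 y - K * ln (y + 1)" for y
    have dphi: "(phi has_real_derivative (u2 y - K / (y + 1))) (at y)" if "-1 < y" for y
      unfolding phi_def using that
      by (auto intro!: derivative_eq_intros d2 simp: field_simps)
    from MVT2[OF \<open>x < 0\<close>, of phi "\<lambda>y. u2 y - K / (y + 1)"] dphi that
    obtain z where z: "x < z" "z < 0" "phi 0 - phi x = (0 - x) * (u2 z - K / (z + 1))"
      by force
    have "u2 z - K / (z + 1) \<le> 0" using b[of z] z that by auto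
    then have "phi 0 \<le> phi x" using z \<open>x < 0\<close> by (smt (verit) mult_nonneg_nonpos)
    then show ?thesis by (simp add: phi_def)
  qed simp
  have c: "u 0 + u1 0 * x \<le> u x" if "-1 < x" "x \<le> 0" for x
  proof (cases "x = 0")
    case False
    with that have "x < 0" by simp
    define xi where "xi y = u y - u1 0 * y" for y
    have dxi: "(xi has_real_derivative (u1 y - u1 0)) (at y)" if "-1 < y" for y
      unfolding xi_def using that by (auto intro!: derivative_eq_intros d1)
    from MVT2[OF \<open>x < 0\<close>, of xi "\<lambda>y. u1 y - u1 0"] dxi that
    obtain z where z: "x < z" "z < 0" "xi 0 - xi x = (0 - x) * (u1 z - u1 0)"
      by force
    have "u1 z - u1 0 \<le> 0" using a[of z] z that by auto
    then have "xi 0 \<le> xi x" using z \<open>x < 0\<close> by (smt (verit) mult_nonneg_nonpos)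
    then show ?thesis by (simp add: xi_def)
  qed simp
  have d: "u x \<le> u 0 + u1 0 * x + K * ((x + 1) * ln (x + 1) - (x + 1)) + K" if "-1 < x" "x \<le> 0" for x
  proof (cases "x = 0")
    case False
    with that have "x < 0" by simp
    define psi where "psi y = u y - u1 0 * y - K * ((y + 1) * ln (y + 1) - (y + 1))" for y
    have dl: "((\<lambda>y. (y + 1) * ln (y + 1) - (y + 1)) has_real_derivative ln (y + 1)) (at y)" if "-1 < y" for y
    proof -
      have "((\<lambda>y. (y + 1) * ln (y + 1) - (y + 1)) has_real_derivative
             (1 * ln (y + 1) + (y + 1) * (1 / (y + 1)) - 1)) (at y)"
        using that by (auto intro!: derivative_eq_intros)
      then show ?thesis using that by simp
    qed
    have dpsi: "(psi has_real_derivative (u1 y - u1 0 - K * ln (y + 1))) (at y)" if "-1 < y" for y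
      unfolding psi_def using that
      by (auto intro!: derivative_eq_intros d1 dl)
    from MVT2[OF \<open>x < 0\<close>, of psi "\<lambda>y. u1 y - u1 0 - K * ln (y + 1)"] dpsi that
    obtain z where z: "x < z" "z < 0" "psi 0 - psi x = (0 - x) * (u1 z - u1 0 - K * ln (z + 1))"
      by force
    have "u1 z - u1 0 - K * ln (z + 1) \<ge> 0" using bb[of z] z that by auto
    then have "psi x \<le> psi 0" using z \<open>x < 0\<close> by (smt (verit) mult_nonneg_nonneg)
    then show ?thesis by (simp add: psi_def)
  qed simp
  show ?thesis
  proof (intro exI[of _ "\<bar>u 0\<bar> + \<bar>u1 0\<bar> + K"] allI impI)
    fix x :: real assume x: "-1 < x \<and> x \<le> 0"
    have l: "ln (x + 1) \<le> 0" using x by simp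
    have "(x + 1) * ln (x + 1) \<le> 0" using x l by (simp add: mult_nonneg_nonpos)
    then have "(x + 1) * ln (x + 1) - (x + 1) \<le> 0" using x by linarith
    then have "K * ((x + 1) * ln (x + 1) - (x + 1)) \<le> 0" using Kpos
      by (intro mult_nonneg_nonpos) auto
    moreover have "\<bar>u1 0 * x\<bar> \<le> \<bar>u1 0\<bar>"
    proof -
      have "\<bar>x\<bar> \<le> 1" using x by simp
      then show ?thesis by (simp add: abs_mult mult_left_le)
    qed
    ultimately show "\<bar>u x\<bar> \<le> \<bar>u 0\<bar> + \<bar>u1 0\<bar> + K"
      using c[of x] d[of x] x by (auto simp: abs_le_iff)
  qed
qed

lemma pg_union: assumes "pg S f" "pg T f" shows "pg (S \<union> T) f"
proof -
  obtain C m where C: "\<forall>x\<in>S. \<bar>f x\<bar> \<le> C * (1 + \<bar>x\<bar>) ^ m" using assms(1) unfolding pg_def by blast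
  obtain D n where D: "\<forall>x\<in>T. \<bar>f x\<bar> \<le> D * (1 + \<bar>x\<bar>) ^ n" using assms(2) unfolding pg_def by blast
  have "\<bar>f x\<bar> \<le> (\<bar>C\<bar> + \<bar>D\<bar>) * (1 + \<bar>x\<bar>) ^ (m + n)" if "x \<in> S \<union> T" for x
  proof -
    have 1: "(1 + \<bar>x\<bar>) ^ m \<le> (1 + \<bar>x\<bar>) ^ (m + n)" "(1 + \<bar>x\<bar>) ^ n \<le> (1 + \<bar>x\<bar>) ^ (m + n)"
      by (auto intro: power_increasing)
    have "C * (1 + \<bar>x\<bar>) ^ m \<le> \<bar>C\<bar> * (1 + \<bar>x\<bar>) ^ (m + n)"
      using mult_mono[OF abs_ge_self 1(1)] by auto
    moreover have "D * (1 + \<bar>x\<bar>) ^ n \<le> \<bar>D\<bar> * (1 + \<bar>x\<bar>) ^ (m + n)"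
      using mult_mono[OF abs_ge_self 1(2)] by auto
    moreover have "0 \<le> \<bar>C\<bar> * (1 + \<bar>x\<bar>) ^ (m + n)" "0 \<le> \<bar>D\<bar> * (1 + \<bar>x\<bar>) ^ (m + n)" by auto
    moreover have "\<bar>f x\<bar> \<le> C * (1 + \<bar>x\<bar>) ^ m \<or> \<bar>f x\<bar> \<le> D * (1 + \<bar>x\<bar>) ^ n" using C D that by auto
    ultimately show ?thesis unfolding distrib_right by linarith
  qed
  thus ?thesis unfolding pg_def by blast
qed

lemma powr_le_1_plus: assumes "(y::real) > 0" "0 \<le> e" "e \<le> 1" shows "y powr e \<le> 1 + y"
proof (cases "y \<le> 1")
  case True
  then have "y powr e \<le> 1" using assms by (intro powr_le1) auto
  then show ?thesis using assms by simp
next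
  case False
  then have "y powr e \<le> y powr 1" using assms by (intro powr_mono) auto
  then show ?thesis using assms by simp
qed

lemma class_from_rational:
  fixes p :: "real \<Rightarrow> real" and lam eps :: real and v H :: "real \<Rightarrow> real" and a b N D :: "real poly"
  assumes pab: "\<forall>x\<in>{-1..}. poly b x \<noteq> 0 \<and> p x = poly a x / poly b x"
    and ppos: "\<forall>x\<in>{-1..}. p x > 0" and lam: "lam > 0"
    and v_def: "v = (\<lambda>x. p x * exp (- lam * x))"
    and Dnz: "\<forall>x\<ge>-1. poly D x \<noteq> 0"
    and HND: "\<forall>x\<ge>-1. H x = poly N x / poly D x"
    and Hpos: "\<forall>x>-1. H x > 0"
    and H0: "H (-1) = 0"
    and Hd: "(H has_real_derivative 2) (at (-1) within {-1..})"
    and eps: "0 < eps" "eps < 1"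
  shows "in_H_class eps v H"
proof -
  have pgp: "pg {-1..} (\<lambda>x. 1 + \<bar>p x\<bar>)"
  proof -
    have "pg {-1..} (\<lambda>x. poly a x / poly b x)" using pab by (intro pg_rat) auto
    then have "pg {-1..} p" by (rule pg_cong) (use pab in auto)
    then have "pg {-1..} (\<lambda>x. \<bar>p x\<bar>)" unfolding pg_def by simp
    from pg_add[OF pg_const this] show ?thesis .
  qed
  have vb: "v x powr eps \<le> (1 + \<bar>p x\<bar>) * exp (- (eps * lam) * x)" if "x \<ge> -1" for x
  proof -
    have px: "p x > 0" using ppos that by auto
    have "v x powr eps = p x powr eps * exp (- lam * x) powr eps"
      unfolding v_def using px by (simp add: powr_mult)
    also have "exp (- lam * x) powr eps = exp (- (eps * lam) * x)"
      by (simp add: exp_powr_real algebra_simps)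
    also have "p x powr eps \<le> 1 + \<bar>p x\<bar>" using powr_le_1_plus[OF px, of eps] eps px by simp
    finally show ?thesis by (simp add: mult_right_mono)
  qed
  have wb: "\<exists>C. \<forall>x\<in>S. \<bar>v x powr eps * f x\<bar> \<le> C" if pgS: "pg S f" and sS: "S \<subseteq> {-1..}" for S f
  proof -
    have "pg S (\<lambda>x. (1 + \<bar>p x\<bar>) * f x)" using pg_mult[OF pg_subset[OF pgp sS] pgS] .
    from pg_exp_bound[OF this sS, of "eps * lam"] eps lam
    obtain K where K: "\<forall>x\<in>S. \<bar>(1 + \<bar>p x\<bar>) * f x\<bar> * exp (- (eps * lam) * x) \<le> K" by auto
    have "\<bar>v x powr eps * f x\<bar> \<le> K" if x: "x \<in> S" for x
    proof -
      have "\<bar>v x powr eps * f x\<bar> = v x powr eps * \<bar>f x\<bar>" by (simp add: abs_mult)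
      also have "\<dots> \<le> (1 + \<bar>p x\<bar>) * exp (- (eps * lam) * x) * \<bar>f x\<bar>"
        using vb[of x] x sS by (intro mult_right_mono) auto
      also have "\<dots> = \<bar>(1 + \<bar>p x\<bar>) * f x\<bar> * exp (- (eps * lam) * x)"
        by (simp add: abs_mult)
      also have "\<dots> \<le> K" using K x by auto
      finally show ?thesis .
    qed
    then show ?thesis by blast
  qed
  have pgH: "pg {-1..} H"
  proof (rule pg_cong)
    show "pg {-1..} (\<lambda>x. poly N x / poly D x)" by (rule pg_rat) (use Dnz in auto)
  qed (use HND in auto)
  define N1 where "N1 = pderiv N * D - N * pderiv D"
  define D1 where "D1 = D * D"
  define N2 where "N2 = pderiv N1 * D1 - N1 * pderiv D1"
  define D2 where "D2 = D1 * D1"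
  have D1nz: "\<forall>x\<ge>-1. poly D1 x \<noteq> 0" using Dnz by (simp add: D1_def)
  have D2nz: "\<forall>x\<ge>-1. poly D2 x \<noteq> 0" using D1nz by (simp add: D2_def)
  have dH: "deriv H x = poly N1 x / poly D1 x" if "x > -1" for x
  proof -
    have "deriv H x = poly (pderiv N * D - N * pderiv D) x / poly (D * D) x"
      by (rule rat_deriv_on(2)[where S="{-1<..}"]) (use HND Dnz that in auto)
    then show ?thesis by (simp only: N1_def D1_def)
  qed
  have ddH: "deriv (deriv H) x = poly N2 x / poly D2 x" if "x > -1" for x
  proof -
    have "deriv (deriv H) x = poly (pderiv N1 * D1 - N1 * pderiv D1) x / poly (D1 * D1) x"
      by (rule rat_deriv_on(2)[where S="{-1<..}"]) (use dH D1nz that in auto)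
    then show ?thesis by (simp only: N2_def D2_def)
  qed
  have pgdH: "pg {-1<..} (deriv H)"
  proof (rule pg_cong)
    show "pg {-1<..} (\<lambda>x. poly N1 x / poly D1 x)"
      by (rule pg_subset[OF pg_rat[of "-1" D1 N1]]) (use D1nz in auto)
  qed (use dH in auto)
  have pgddH: "pg {-1..} (\<lambda>x. poly N2 x / poly D2 x)"
    by (rule pg_rat) (use D2nz in auto)
  have HK: "\<exists>K. \<forall>y. -1 < y \<and> y \<le> 0 \<longrightarrow> 1 / H y \<le> K / (y + 1)"
  proof -
    have "poly N (-1) = 0" using HND H0 Dnz by auto
    then have "[:- (-1), 1:] dvd N" by (simp only: poly_eq_0_iff_dvd)
    then obtain N1 where N1: "N = [:1, 1:] * N1" by (auto elim: dvdE)
    define g where "g y = poly N1 y / poly D y" for y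
    have Hg: "H y = (y + 1) * g y" if "y \<ge> -1" for y
      using HND that by (simp add: N1 g_def algebra_simps)
    have gpos: "g y > 0" if "-1 < y" for y
    proof -
      have "H y > 0" using Hpos that by auto
      then show ?thesis using Hg[of y] that by (simp add: zero_less_mult_iff)
    qed
    have lim1: "((\<lambda>y. (H y - H (-1)) / (y - (-1))) \<longlongrightarrow> 2) (at_right (-1))"
      using Hd unfolding has_field_derivative_iff
      by (rule tendsto_within_subset) auto
    have ev: "eventually (\<lambda>y. (H y - H (-1)) / (y - (-1)) = g y) (at_right (-1))"
      unfolding eventually_at_filter
      by (rule always_eventually) (auto simp: Hg H0)
    have lim2: "(g \<longlongrightarrow> 2) (at_right (-1))"
      using tendsto_cong[OF ev] lim1 by simp
    have gcont: "continuous_on {-1..0} g"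
      unfolding g_def using Dnz by (intro continuous_intros) auto
    have "isCont g (-1)"
      unfolding g_def using Dnz by (intro continuous_intros) auto
    then have "(g \<longlongrightarrow> g (-1)) (at_right (-1))"
      by (simp add: isCont_def tendsto_within_subset[where S=UNIV])
    with lim2 have g1: "g (-1) = 2"
      using tendsto_unique[OF trivial_limit_at_right_real] by blast
    obtain x0 where x0: "x0 \<in> {-1..0}" "\<forall>y\<in>{-1..0}. g x0 \<le> g y"
      using continuous_attains_inf[OF compact_Icc _ gcont] by auto
    have gx0: "g x0 > 0"
    proof (cases "x0 = -1")
      case True then show ?thesis using g1 by simp
    next
      case False then show ?thesis using x0(1) gpos by auto
    qed
    show ?thesis
    proof (intro exI[of _ "1 / g x0"] allI impI)
      fix y :: real assume y: "-1 < y \<and> y \<le> 0"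
      have "g x0 \<le> g y" using x0(2) y by auto
      then have "(y + 1) * g x0 \<le> (y + 1) * g y" using y by (intro mult_left_mono) auto
      moreover have "0 < (y + 1) * g x0" using y gx0 by simp
      ultimately have "1 / ((y + 1) * g y) \<le> 1 / ((y + 1) * g x0)"
        by (intro divide_left_mono) auto
      then show "1 / H y \<le> 1 / g x0 / (y + 1)" using Hg[of y] y by (simp add: mult.commute)
    qed
  qed
  have c1: "\<exists>C. \<forall>x\<in>{-1..}. v x powr eps * (H x)\<^sup>2 \<le> C"
  proof -
    obtain C where "\<forall>x\<in>{-1..}. \<bar>v x powr eps * (H x * H x)\<bar> \<le> C"
      using wb[OF pg_mult[OF pgH pgH] order_refl] by blast
    then show ?thesis by (metis abs_ge_self order_trans power2_eq_square)
  qed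
  have c2: "\<exists>C. \<forall>x\<in>{-1<..}. v x powr eps * \<bar>deriv H x\<bar>\<^sup>2 \<le> C"
  proof -
    obtain C where "\<forall>x\<in>{-1<..}. \<bar>v x powr eps * (deriv H x * deriv H x)\<bar> \<le> C"
    proof -
      have sub: "{-1<..} \<subseteq> {-1::real..}" by auto
      show ?thesis using wb[OF pg_mult[OF pgdH pgdH] sub] that by blast
    qed
    then show ?thesis by (metis abs_ge_self order_trans power2_eq_square power2_abs)
  qed
  have c3: "\<exists>\<delta> C. \<delta> > 0 \<and> C > 0 \<and> (\<forall>x\<in>{-1<..-1+\<delta>}. \<bar>deriv (deriv H) x\<bar>\<^sup>2 < C)"
  proof -
    obtain C m where C: "\<forall>x\<in>{-1..}. \<bar>poly N2 x / poly D2 x\<bar> \<le> C * (1 + \<bar>x\<bar>) ^ m"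
      using pgddH unfolding pg_def by blast
    have "\<bar>deriv (deriv H) x\<bar>\<^sup>2 < (\<bar>C\<bar> * 2 ^ m)\<^sup>2 + 1" if x: "x \<in> {-1<..-1+1}" for x
    proof -
      have xx: "x \<in> {-1..}" "x > -1" using x by auto
      have "\<bar>deriv (deriv H) x\<bar> = \<bar>poly N2 x / poly D2 x\<bar>" using ddH xx by simp
      also have "\<dots> \<le> C * (1 + \<bar>x\<bar>) ^ m" using C xx(1) by blast
      also have "\<dots> \<le> \<bar>C\<bar> * (1 + \<bar>x\<bar>) ^ m" by (intro mult_right_mono) auto
      also have "\<dots> \<le> \<bar>C\<bar> * 2 ^ m" using x by (intro mult_left_mono power_mono) auto
      finally have "\<bar>deriv (deriv H) x\<bar> \<le> \<bar>C\<bar> * 2 ^ m" .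
      then have "\<bar>deriv (deriv H) x\<bar>\<^sup>2 \<le> (\<bar>C\<bar> * 2 ^ m)\<^sup>2"
        by (intro power_mono) auto
      then show ?thesis by simp
    qed
    moreover have "(\<bar>C\<bar> * 2 ^ m)\<^sup>2 + 1 > 0" by (simp add: add_nonneg_pos)
    ultimately show ?thesis by (intro exI[of _ 1] exI[of _ "(\<bar>C\<bar> * 2 ^ m)\<^sup>2 + 1"]) auto
  qed
  have c4: "(\<exists>C. \<forall>x\<in>{-1<..}. \<bar>v x powr eps * u x\<bar> \<le> C) \<and>
        (\<exists>\<delta>0>0. \<forall>\<delta>. 0 < \<delta> \<and> \<delta> < \<delta>0 \<longrightarrow>
           (\<forall>k\<le>(2::nat). \<exists>C. \<forall>x\<in>{-1+\<delta>..}. \<bar>v x powr eps * (deriv ^^ k) u x\<bar> \<le> C))"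
    if su: "symp_potential H u" for u
  proof -
    define u1 where "u1 = deriv u"
    define u2 where "u2 = deriv u1"
    have d1: "(u has_real_derivative u1 y) (at y)" if "-1 < y" for y
      using su that unfolding symp_potential_def u1_def by (simp add: DERIV_deriv_iff_real_differentiable)
    have d2: "(u1 has_real_derivative u2 y) (at y)" if "-1 < y" for y
    proof -
      have "deriv u differentiable at y" using su that unfolding symp_potential_def by blast
      then show ?thesis unfolding u1_def u2_def by (simp only: DERIV_deriv_iff_real_differentiable[symmetric])
    qed
    have u2H: "u2 y = 1 / H y" if "-1 < y" for y
      using su that unfolding symp_potential_def u1_def u2_def by simp
    have Nnz: "poly N y \<noteq> 0" if "-1 < y" for y
      using HND Hpos that by (metis less_imp_le div_0 less_irrefl)
    have pg2: "pg {c..} u2" if c: "c > -1" for c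
    proof -
      have "pg {c..} (\<lambda>x. poly D x / poly N x)" using Nnz c by (intro pg_rat) auto
      then show ?thesis
      proof (rule pg_cong)
        fix x assume "x \<in> {c..}"
        then have "x > -1" using c by auto
        then show "u2 x = poly D x / poly N x" using u2H HND Dnz Nnz by simp
      qed
    qed
    have pg1: "pg {c..} u1" if c: "c > -1" for c
      by (rule pg_integrate[OF d2 pg2[OF c]]) (use c in auto)
    have pg0: "pg {c..} u" if c: "c > -1" for c
      by (rule pg_integrate[OF d1 pg1[OF c]]) (use c in auto)
    obtain K0 where K0: "\<forall>y. -1 < y \<and> y \<le> 0 \<longrightarrow> 1 / H y \<le> K0 / (y + 1)" using HK by blast
    have K: "\<And>y. -1 < y \<Longrightarrow> y \<le> 0 \<Longrightarrow> 0 < u2 y \<and> u2 y \<le> K0 / (y + 1)"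
      using K0 u2H Hpos by auto
    obtain B where B: "\<forall>y. -1 < y \<and> y \<le> 0 \<longrightarrow> \<bar>u y\<bar> \<le> B"
      using u_bound_left[OF d1 d2 K] by blast
    have "pg ({-1<..0} \<union> {0..}) u"
      by (rule pg_union[OF pg_abs_bounded[of _ _ B] pg0]) (use B in auto)
    then have pgu: "pg {-1<..} u" by (rule pg_subset) auto
    show ?thesis
    proof
      show "\<exists>C. \<forall>x\<in>{-1<..}. \<bar>v x powr eps * u x\<bar> \<le> C" using wb[OF pgu] by (force simp: subset_eq)
      show "\<exists>\<delta>0>0. \<forall>\<delta>. 0 < \<delta> \<and> \<delta> < \<delta>0 \<longrightarrow>
           (\<forall>k\<le>(2::nat). \<exists>C. \<forall>x\<in>{-1+\<delta>..}. \<bar>v x powr eps * (deriv ^^ k) u x\<bar> \<le> C)"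
      proof (rule exI[of _ 1], intro conjI allI impI)
        fix \<delta> :: real and k :: nat assume \<delta>: "0 < \<delta> \<and> \<delta> < 1" and k: "k \<le> 2"
        have sub: "{-1+\<delta>..} \<subseteq> {-1..}" using \<delta> by auto
        have c: "-1 + \<delta> > -1" using \<delta> by simp
        have "k = 0 \<or> k = 1 \<or> k = 2" using k by auto
        then have "pg {-1+\<delta>..} ((deriv ^^ k) u)"
          using pg0[OF c] pg1[OF c] pg2[OF c] by (auto simp: u1_def u2_def numeral_2_eq_2)
        from wb[OF this sub] show "\<exists>C. \<forall>x\<in>{-1+\<delta>..}. \<bar>v x powr eps * (deriv ^^ k) u x\<bar> \<le> C" .
      qed simp
    qed
  qed
  show ?thesis unfolding in_H_class_def using c1 c2 c3 c4 by blast
qed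

lemma poly_differentiable: "(\<lambda>y. poly p y) differentiable at (x::real)"
  using poly_DERIV[of p x] real_differentiable_def by blast

lemma exp_lin_differentiable: "(\<lambda>y. exp (c * y)) differentiable at (x::real)"
proof -
  have "((\<lambda>y. exp (c * y)) has_real_derivative exp (c * x) * c) (at x)"
    by (auto intro!: derivative_eq_intros)
  then show ?thesis using real_differentiable_def by blast
qed

lemma const_on:
  fixes f :: "real \<Rightarrow> real"
  assumes d: "\<And>y. -1 < y \<Longrightarrow> (f has_real_derivative 0) (at y)" and y: "-1 < y"
  shows "f y = f 0"
proof -
  consider "y < 0" | "y = 0" | "y > 0" by linarith
  then show ?thesis
  proof cases
    case 1
    from MVT2[OF 1, of f "\<lambda>_. 0"] d y show ?thesis by force
  next
    case 3
    from MVT2[OF 3, of f "\<lambda>_. 0"] d y show ?thesis by force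
  qed simp
qed

lemma H_rational:
  fixes p :: "real \<Rightarrow> real" and q :: "real poly" and lam :: real
    and v w H :: "real \<Rightarrow> real" and a b :: "real poly"
  assumes pab: "\<forall>x\<in>{-1..}. poly b x \<noteq> 0 \<and> p x = poly a x / poly b x"
    and ppos: "\<forall>x\<in>{-1..}. p x > 0"
    and lam: "lam > 0"
    and v_def: "v = (\<lambda>x. p x * exp (- lam * x))"
    and w_def: "w = (\<lambda>x. poly q x * exp (- lam * x))"
    and F_affine: "\<forall>a b. futaki v w (\<lambda>x. a * x + b) = 0"
    and H: "cscK_profile v w H"
  shows "\<exists>N D. (\<forall>x\<ge>-1. poly D x \<noteq> 0) \<and> (\<forall>x\<ge>-1. H x = poly N x / poly D x)"
proof -
  obtain S where S: "smult lam S - pderiv S = q" using first_order_poly[of lam q] lam by auto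
  obtain T where T: "smult lam T - pderiv T = S" using first_order_poly[of lam S] lam by auto
  define G where "G y = poly (-T) y * exp (- lam * y)" for y
  define G1 where "G1 y = poly S y * exp (- lam * y)" for y
  define F1 where "F1 y = poly (-S) y * exp (- lam * y)" for y
  define F2 where "F2 y = y * F1 y + G y" for y
  have dG: "(G has_real_derivative G1 y) (at y)" for y
  proof -
    have "pderiv (-T) - smult lam (-T) = S" using T by (simp add: pderiv_minus)
    then show ?thesis using der_pe[of "-T" lam y] unfolding G_def G1_def by simp
  qed
  have dG1: "(G1 has_real_derivative - w y) (at y)" for y
  proof -
    have "pderiv S - smult lam S = - q" using S by (simp add: algebra_simps)
    then show ?thesis using der_pe[of S lam y] unfolding G1_def w_def by simp
  qed
  have dF1: "(F1 has_real_derivative w y) (at y)" for y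
  proof -
    have "pderiv (-S) - smult lam (-S) = q" using S by (simp add: pderiv_minus)
    then show ?thesis using der_pe[of "-S" lam y] unfolding F1_def w_def by simp
  qed
  have F1G1: "F1 y = - G1 y" for y by (simp add: F1_def G1_def)
  have dF2: "(F2 has_real_derivative y * w y) (at y)" for y
  proof -
    have "(F2 has_real_derivative (1 * F1 y + y * w y + G1 y)) (at y)"
      unfolding F2_def by (auto intro!: derivative_eq_intros dF1 dG)
    then show ?thesis by (simp add: F1G1)
  qed
  have limF1: "(F1 \<longlongrightarrow> 0) at_top" unfolding F1_def by (rule pe_lim[OF lam])
  have limF2: "(F2 \<longlongrightarrow> 0) at_top"
  proof -
    have "F2 = (\<lambda>y. poly (pCons 0 (-S) + (-T)) y * exp (- lam * y))"
      by (rule ext) (simp add: F2_def F1_def G_def algebra_simps)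
    then show ?thesis by (simp only:) (rule pe_lim[OF lam])
  qed
  have wc: "isCont w x" for x unfolding w_def by (intro continuous_intros)
  have xwc: "isCont (\<lambda>x. x * w x) x" for x unfolding w_def by (intro continuous_intros)
  have vm1: "v (-1) > 0" using ppos unfolding v_def by auto
  have fut1: "2 * v (-1) = (LBINT x:{-1..}. w x)"
    using F_affine[rule_format, of 0 1] unfolding futaki_def by simp
  have int1: "set_integrable lborel {-1..} w"
  proof (rule ccontr)
    assume "\<not> set_integrable lborel {-1..} w"
    from nonint_zero[OF this] fut1 vm1 show False by simp
  qed
  have I1: "(LBINT x:{-1..}. w x) = - F1 (-1)"
    by (rule improper_FTC[OF int1 dF1 wc limF1])
  have fut2: "- 2 * v (-1) = (LBINT x:{-1..}. x * w x)"
    using F_affine[rule_format, of 1 0] unfolding futaki_def by simp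
  have int2: "set_integrable lborel {-1..} (\<lambda>x. x * w x)"
  proof (rule ccontr)
    assume "\<not> set_integrable lborel {-1..} (\<lambda>x. x * w x)"
    from nonint_zero[OF this] fut2 vm1 show False by simp
  qed
  have I2: "(LBINT x:{-1..}. x * w x) = - F2 (-1)"
    by (rule improper_FTC[OF int2 dF2 xwc limF2])
  have G1m1: "G1 (-1) = 2 * v (-1)" using fut1 I1 F1G1 by simp
  have Gm1: "G (-1) = 0" using fut2 I2 G1m1 F1G1 by (simp add: F2_def)
  define V where "V y = poly a y / poly b y * exp (- lam * y)" for y
  define Rd where "Rd y = poly (pderiv a * b - a * pderiv b) y / poly (b * b) y" for y
  define V1 where "V1 y = Rd y * exp (- lam * y) + (- lam * exp (- lam * y)) * (poly a y / poly b y)" for y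
  have vV: "v y = V y" if "y \<ge> -1" for y using pab that by (simp add: v_def V_def)
  have bnz: "poly b y \<noteq> 0" if "y \<ge> -1" for y using pab that by auto
  have dexp: "((\<lambda>y. exp (- lam * y)) has_real_derivative (- lam * exp (- lam * y))) (at y)" for y
    by (auto intro!: derivative_eq_intros)
  have dV: "(V has_real_derivative V1 y) (at y)" if "y \<ge> -1" for y
    unfolding V_def V1_def Rd_def
    by (rule DERIV_mult[OF rat_has_deriv[OF bnz[OF that]] dexp])
  have ed: "(\<lambda>x. exp (- (lam * x))) differentiable at y" for y
    using exp_lin_differentiable[of "-lam" y] by simp
  have V1diff: "V1 differentiable at y" if "y \<ge> -1" for y
  proof -
    have "poly (b * b) y \<noteq> 0" using bnz[OF that] by simp
    then show ?thesis unfolding V1_def Rd_def using bnz[OF that]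
      by (intro differentiable_add differentiable_mult differentiable_divide poly_differentiable
          differentiable_const differentiable_minus) (auto intro: ed)
  qed
  have Hdiff: "H differentiable at y" if "y > -1" for y using H that unfolding cscK_profile_def by blast
  have dHdiff: "deriv H differentiable at y" if "y > -1" for y using H that unfolding cscK_profile_def by blast
  have ode: "- deriv (deriv (\<lambda>y. v y * H y)) y = w y" if "y > -1" for y
    using H that unfolding cscK_profile_def by blast
  define Psi where "Psi y = V1 y * H y + deriv H y * V y" for y
  have DvH: "((\<lambda>y. v y * H y) has_real_derivative Psi y) (at y)" if "y > -1" for y
  proof -
    have "((\<lambda>y. V y * H y) has_real_derivative Psi y) (at y)"
      unfolding Psi_def
      by (rule DERIV_mult[OF dV]) (use that Hdiff DERIV_deriv_iff_real_differentiable in auto)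
    then show ?thesis
      by (rule has_field_derivative_transform_within_open[where S="{-1<..}"]) (use that vV in auto)
  qed
  have dvH_eq: "deriv (\<lambda>y. v y * H y) y = Psi y" if "y > -1" for y
    using DvH[OF that] by (rule DERIV_imp_deriv)
  have Psidiff: "Psi differentiable at y" if "y > -1" for y
  proof -
    have "V differentiable at y" using dV[of y] that real_differentiable_def by auto
    then show ?thesis unfolding Psi_def using that
      by (intro differentiable_add differentiable_mult V1diff Hdiff dHdiff) auto
  qed
  have ddvH: "(deriv (\<lambda>y. v y * H y) has_real_derivative - w y) (at y)" if "y > -1" for y
  proof -
    have "(Psi has_real_derivative deriv Psi y) (at y)"
      using Psidiff[OF that] DERIV_deriv_iff_real_differentiable by blast
    then have 1: "(deriv (\<lambda>y. v y * H y) has_real_derivative deriv Psi y) (at y)"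
      by (rule has_field_derivative_transform_within_open[where S="{-1<..}"]) (use that dvH_eq in auto)
    then have "deriv (deriv (\<lambda>y. v y * H y)) y = deriv Psi y" by (rule DERIV_imp_deriv)
    with ode[OF that] have "deriv Psi y = - w y" by simp
    with 1 show ?thesis by simp
  qed
  define alpha where "alpha = deriv (\<lambda>y. v y * H y) 0 - G1 0"
  have Phi: "deriv (\<lambda>y. v y * H y) y - G1 y = alpha" if "y > -1" for y
  proof -
    have "((\<lambda>y. deriv (\<lambda>y. v y * H y) y - G1 y) has_real_derivative 0) (at y)" if "y > -1" for y
      using DERIV_diff[OF ddvH[OF that] dG1[of y]] by simp
    from const_on[OF this that] show ?thesis by (simp add: alpha_def)
  qed
  define beta where "beta = v 0 * H 0 - G 0 - alpha * 0"
  have Xi: "v y * H y = G y + alpha * y + beta" if "y > -1" for y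
  proof -
    have "((\<lambda>y. v y * H y - G y - alpha * y) has_real_derivative 0) (at y)" if "y > -1" for y
    proof -
      have "((\<lambda>y. v y * H y - G y - alpha * y) has_real_derivative (Psi y - G1 y - alpha * 1)) (at y)"
        by (intro DERIV_diff DvH[OF that] dG DERIV_cmult DERIV_ident)
      moreover have "Psi y - G1 y - alpha * 1 = 0" using Phi[OF that] dvH_eq[OF that] by simp
      ultimately show ?thesis by simp
    qed
    from const_on[OF this that] show ?thesis by (simp add: beta_def)
  qed
  have H0: "H (-1) = 0" and Hd: "(H has_real_derivative 2) (at (-1) within {-1..})"
    using H unfolding cscK_profile_def by auto
  have tH: "(H \<longlongrightarrow> 0) (at_right (-1))"
  proof -
    have "(H \<longlongrightarrow> H (-1)) (at (-1) within {-1..})"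
      using DERIV_continuous[OF Hd] by (simp add: continuous_within)
    then show ?thesis using H0 by (rule_tac tendsto_within_subset) auto
  qed
  have Vc: "isCont V (-1)" using dV[of "-1"] by (auto intro: DERIV_isCont)
  have tV: "(V \<longlongrightarrow> V (-1)) (at_right (-1))"
    using Vc by (simp add: isCont_def tendsto_within_subset[where S=UNIV])
  have Gc: "isCont G (-1)" using dG[of "-1"] by (auto intro: DERIV_isCont)
  have tG: "(G \<longlongrightarrow> G (-1)) (at_right (-1))"
    using Gc by (simp add: isCont_def tendsto_within_subset[where S=UNIV])
  have ev1: "eventually (\<lambda>y. V y * H y = G y + alpha * y + beta) (at_right (-1))"
    unfolding eventually_at_filter
    by (rule always_eventually) (auto simp: Xi vV[symmetric])
  have "((\<lambda>y. V y * H y) \<longlongrightarrow> V (-1) * 0) (at_right (-1))" by (intro tendsto_mult tV tH)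
  then have "((\<lambda>y. G y + alpha * y + beta) \<longlongrightarrow> 0) (at_right (-1))"
    using tendsto_cong[OF ev1] by simp
  moreover have "((\<lambda>y. G y + alpha * y + beta) \<longlongrightarrow> G (-1) + alpha * (-1) + beta) (at_right (-1))"
    by (intro tendsto_intros tG)
  ultimately have "G (-1) + alpha * (-1) + beta = 0"
    using tendsto_unique[OF trivial_limit_at_right_real] by blast
  then have beta: "beta = alpha" using Gm1 by simp
  have tq: "((\<lambda>y. (H y - H (-1)) / (y - (-1))) \<longlongrightarrow> 2) (at_right (-1))"
    using Hd unfolding has_field_derivative_iff by (rule tendsto_within_subset) auto
  have tGq: "((\<lambda>y. (G y - G (-1)) / (y - (-1))) \<longlongrightarrow> G1 (-1)) (at_right (-1))"
    using dG[of "-1"] unfolding has_field_derivative_iff by (rule tendsto_within_subset) auto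
  have ev2: "eventually (\<lambda>y. V y * ((H y - H (-1)) / (y - (-1))) = alpha + (G y - G (-1)) / (y - (-1))) (at_right (-1))"
    unfolding eventually_at_filter
  proof (rule always_eventually, intro allI impI)
    fix y :: real assume "y \<in> {-1<..}" "y \<noteq> -1"
    then have y: "y > -1" by auto
    have "V y * H y = G y + alpha * (y + 1)" using Xi[OF y] vV[of y] y beta by (simp add: algebra_simps)
    then show "V y * ((H y - H (-1)) / (y - (-1))) = alpha + (G y - G (-1)) / (y - (-1))"
      using y H0 Gm1 by (simp add: field_simps)
  qed
  have "((\<lambda>y. V y * ((H y - H (-1)) / (y - (-1)))) \<longlongrightarrow> V (-1) * 2) (at_right (-1))"
    by (intro tendsto_mult tV tq)
  then have "((\<lambda>y. alpha + (G y - G (-1)) / (y - (-1))) \<longlongrightarrow> V (-1) * 2) (at_right (-1))"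
    using tendsto_cong[OF ev2] by simp
  moreover have "((\<lambda>y. alpha + (G y - G (-1)) / (y - (-1))) \<longlongrightarrow> alpha + G1 (-1)) (at_right (-1))"
    by (intro tendsto_intros tGq)
  ultimately have "V (-1) * 2 = alpha + G1 (-1)"
    using tendsto_unique[OF trivial_limit_at_right_real] by blast
  then have alpha: "alpha = 0" using G1m1 vV[of "-1"] by simp
  have anz: "poly a y \<noteq> 0" if "y \<ge> -1" for y using pab ppos that by force
  show ?thesis
  proof (rule exI[of _ "- T * b"], rule exI[of _ a], rule conjI)
    show "\<forall>x\<ge>-1. poly a x \<noteq> 0" using anz by auto
  next
    show "\<forall>y\<ge>-1. H y = poly (- T * b) y / poly a y"
    proof (intro allI impI)
    fix y :: real assume y: "y \<ge> -1"
    show "H y = poly (- T * b) y / poly a y"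
    proof (cases "y = -1")
      case True
      then have "poly T (-1) = 0" using Gm1 by (simp add: G_def)
      then show ?thesis using True H0 by simp
    next
      case False
      then have y': "y > -1" using y by simp
      have "V y * H y = G y" using Xi[OF y'] vV[of y] y alpha beta by simp
      then have "(H y * poly a y) * exp (- lam * y) = (- (poly T y * poly b y)) * exp (- lam * y)"
        using bnz[OF y] by (simp add: V_def G_def field_simps)
      then have "H y * poly a y = - (poly T y * poly b y)"
        by (metis exp_not_eq_zero mult_cancel_right)
      then show ?thesis using anz[OF y] by (simp add: field_simps)
    qed
    qed
  qed
qed

theorem proposition1p3:
  fixes p :: "real \<Rightarrow> real" and q :: "real poly" and lam :: real
    and v w H :: "real \<Rightarrow> real"
  assumes rat: "\<exists>a b :: real poly. \<forall>x\<in>{-1..}. poly b x \<noteq> 0 \<and> p x = poly a x / poly b x"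
    and ppos: "\<forall>x\<in>{-1..}. p x > 0"
    and lam: "lam > 0"
    and v_def: "v = (\<lambda>x. p x * exp (- lam * x))"
    and w_def: "w = (\<lambda>x. poly q x * exp (- lam * x))"
    and F_affine: "\<forall>a b. futaki v w (\<lambda>x. a * x + b) = 0"
    and Kst: "K_stable v w"
    and H: "cscK_profile v w H"
  shows "\<forall>eps. 0 < eps \<and> eps < 1/2 \<longrightarrow> in_H_class eps v H"
proof (intro allI impI)
  fix eps :: real assume eps: "0 < eps \<and> eps < 1/2"
  obtain a b :: "real poly" where pab: "\<forall>x\<in>{-1..}. poly b x \<noteq> 0 \<and> p x = poly a x / poly b x"
    using rat by blast
  obtain N D where ND: "\<forall>x\<ge>-1. poly D x \<noteq> 0" "\<forall>x\<ge>-1. H x = poly N x / poly D x"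
    using H_rational[OF pab ppos lam v_def w_def F_affine H] by blast
  have Hpos: "\<forall>x>-1. H x > 0" and H0: "H (-1) = 0"
    and Hd: "(H has_real_derivative 2) (at (-1) within {-1..})"
    using H unfolding cscK_profile_def by auto
  show "in_H_class eps v H"
    by (rule class_from_rational[OF pab ppos lam v_def ND Hpos H0 Hd]) (use eps in auto)
qed

end
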